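(* Let $\mathcal{B}$ be a linear-quadratic algebra over $R$ with intrinsic grading as described below, and let $\mathcal{B}^!$ be its quadratic dual with differential $\mu_1$. Define $\delta':R\to\mathcal{B}^!\otimes_R\mathcal{B}^{op}$ by \[ \delta'(e)=\sum_{i:\ e_L(b_i)=e}b_i^*\otimes(b_i)^{op} \] for each elementary idempotent $e$. Then $\delta'$ satisfies the rank-one Type DD structure relations: writing $\delta'(1)=\sum_s a_s\otimes c_s^{op}$, \[ \sum_s(-1)^{\deg_h c_s}\mu_1(a_s)\otimes c_s^{op}+\sum_s a_s\otimes\mu_1(c_s)^{op}+\sum_{s,t}(-1)^{\deg_h(a_t)\deg_h(c_s)}a_sa_t\otimes c_t^{op}c_s^{op}=0 \] in $\mathcal{B}^!\otimes_R\mathcal{B}^{op}$ (where $c_t^{op}c_s^{op}=(c_sc_t)^{op}$).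
   Context: $R=\mathbb{Z}e_1\times\cdots\times\mathbb{Z}e_k$. $\mathcal{B}$ is a unital associative $R$-algebra with a finite set of multiplicative generators $b_1<\dots<b_m$, each with a unique left idempotent $e_L(b_i)$ and right idempotent $e_R(b_i)$. Let $V$ be the free abelian group on the $b_i$ (an $R$-bimodule), $T(V)=\bigoplus_{k\ge0}V^{\otimes_Rk}$, $\mathcal{B}=T(V)/J$, with $J\cap V=0$ and $J=T(V)J_2T(V)$, $J_2=J\cap(V\oplus V\otimes_RV)$ (linear-quadratic). Let $I\subset V\otimes_RV$ be the projection of $J_2$ and $\varphi:I\to V$ the map with $\varphi(r)\oplus r\in J_2$. $\mathcal{B}$ has an intrinsic grading with generators homogeneous, $I$ generated by homogeneous elements, $\varphi$ degree preserving; $\mathcal{B}$ is in homological degree $0$ with zero differential. Quadratic dual: $V^*=\mathrm{Hom}_{\mathbb{Z}}(V,\mathbb{Z})$ with dual basis $b_i^*$ (same idempotents as $b_i$), $I^\perp\subset V^*\otimes_RV^*$ the annihilator of $I$, $\mathcal{B}^!=T(V^* )/(T(V^* )I^\perp T(V^* ))$, $b_i^*$ in bidegree $(-\deg b_i,1)$. As in the paper, the degree-$2$ part $(V^*\otimes_RV^* )/I^\perp$ is identified with $I^*=\mathrm{Hom}_{\mathbb{Z}}(I,\mathbb{Z})$ by restriction, and $\mu_1(v^* )=\varphi^*(v^* )$ on generators, extended by $\mu_1(xy)=(-1)^{\deg_h x}\mu_1(x)y+x\mu_1(y)$. The differential on $\mathcal{B}$ (and on $\mathcal{B}^{op}$)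 is zero. *)

theory Defs
  imports Main "HOL-Library.Function_Algebras"
begin

text \<open>
Elementary idempotents e_1..e_k are the elements of a finite set Idem,
generators b_1..b_m the elements of a finite set Gens, with left/right idempotents eL, eR.
A basis element of the tensor algebra T(V) = (+)_n V^(tensor_R n) is a composable path
(e, [x1,...,xn]): e is the start idempotent (for n = 0 it is the idempotent e itself),
eL x1 = e and eR x_i = eL x_(i+1).  Since the dual basis b_i^* carries the same idempotents as b_i,
T(V^*) has the same path basis; the dual generator b_i^* is represented by the same
function as b_i (gen eL i).
\<close>

type_synonym ('k,'i) path = "'k \<times> 'i list"
type_synonym ('k,'i) tel = "('k,'i) path \<Rightarrow> int"
type_synonym ('k,'i) tensel = "('k,'i) path \<times> ('k,'i) path \<Rightarrow> int"

fun chain :: "('i \<Rightarrow> 'k) \<Rightarrow> ('i \<Rightarrow> 'k) \<Rightarrow> 'k \<Rightarrow> 'i list \<Rightarrow> bool" where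
  "chain eL eR e [] = True"
| "chain eL eR e (x # xs) = (eL x = e \<and> chain eL eR (eR x) xs)"

fun rend :: "('i \<Rightarrow> 'k) \<Rightarrow> 'k \<Rightarrow> 'i list \<Rightarrow> 'k" where
  "rend eR e [] = e"
| "rend eR e (x # xs) = rend eR (eR x) xs"

definition valid_path :: "'k set \<Rightarrow> 'i set \<Rightarrow> ('i \<Rightarrow> 'k) \<Rightarrow> ('i \<Rightarrow> 'k) \<Rightarrow> ('k,'i) path \<Rightarrow> bool" where
  "valid_path Idem Gens eL eR p \<longleftrightarrow>
     fst p \<in> Idem \<and> set (snd p) \<subseteq> Gens \<and> chain eL eR (fst p) (snd p)"

definition TV :: "'k set \<Rightarrow> 'i set \<Rightarrow> ('i \<Rightarrow> 'k) \<Rightarrow> ('i \<Rightarrow> 'k) \<Rightarrow> ('k,'i) tel set" where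
  "TV Idem Gens eL eR =
     {f. finite {p. f p \<noteq> 0} \<and> (\<forall>p. f p \<noteq> 0 \<longrightarrow> valid_path Idem Gens eL eR p)}"

text \<open>Elements of T(V) concentrated in tensor length n (n = 1: V, n = 2: V tensor_R V).\<close>
definition Vpow :: "'k set \<Rightarrow> 'i set \<Rightarrow> ('i \<Rightarrow> 'k) \<Rightarrow> ('i \<Rightarrow> 'k) \<Rightarrow> nat set \<Rightarrow> ('k,'i) tel set" where
  "Vpow Idem Gens eL eR N = {f \<in> TV Idem Gens eL eR. \<forall>p. f p \<noteq> 0 \<longrightarrow> length (snd p) \<in> N}"

definition len_part :: "nat \<Rightarrow> ('k,'i) tel \<Rightarrow> ('k,'i) tel" where
  "len_part n f = (\<lambda>p. if length (snd p) = n then f p else 0)"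

definition tmul :: "('i \<Rightarrow> 'k) \<Rightarrow> ('k,'i) tel \<Rightarrow> ('k,'i) tel \<Rightarrow> ('k,'i) tel" where
  "tmul eR f g = (\<lambda>(e, w). \<Sum>n\<le>length w. f (e, take n w) * g (rend eR e (take n w), drop n w))"

definition gen :: "('i \<Rightarrow> 'k) \<Rightarrow> 'i \<Rightarrow> ('k,'i) tel" where
  "gen eL i = (\<lambda>p. if p = (eL i, [i]) then 1 else 0)"

definition zscale :: "int \<Rightarrow> ('a \<Rightarrow> int) \<Rightarrow> 'a \<Rightarrow> int" where
  "zscale c f = (\<lambda>x. c * f x)"

inductive_set zspan :: "('a \<Rightarrow> int) set \<Rightarrow> ('a \<Rightarrow> int) set" for S where
  zero: "0 \<in> zspan S"
| base: "s \<in> S \<Longrightarrow> s \<in> zspan S"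
| add: "x \<in> zspan S \<Longrightarrow> y \<in> zspan S \<Longrightarrow> x + y \<in> zspan S"
| neg: "x \<in> zspan S \<Longrightarrow> - x \<in> zspan S"

inductive_set ideal_gen :: "('k,'i) tel set \<Rightarrow> ('i \<Rightarrow> 'k) \<Rightarrow> ('k,'i) tel set \<Rightarrow> ('k,'i) tel set"
  for T eR S where
  zero: "0 \<in> ideal_gen T eR S"
| gen: "u \<in> T \<Longrightarrow> s \<in> S \<Longrightarrow> v \<in> T \<Longrightarrow> tmul eR (tmul eR u s) v \<in> ideal_gen T eR S"
| add: "x \<in> ideal_gen T eR S \<Longrightarrow> y \<in> ideal_gen T eR S \<Longrightarrow> x + y \<in> ideal_gen T eR S"
| neg: "x \<in> ideal_gen T eR S \<Longrightarrow> - x \<in> ideal_gen T eR S"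

definition J2 :: "'k set \<Rightarrow> 'i set \<Rightarrow> ('i \<Rightarrow> 'k) \<Rightarrow> ('i \<Rightarrow> 'k) \<Rightarrow> ('k,'i) tel set \<Rightarrow> ('k,'i) tel set" where
  "J2 Idem Gens eL eR J = J \<inter> Vpow Idem Gens eL eR {1, 2}"

definition Iset :: "'k set \<Rightarrow> 'i set \<Rightarrow> ('i \<Rightarrow> 'k) \<Rightarrow> ('i \<Rightarrow> 'k) \<Rightarrow> ('k,'i) tel set \<Rightarrow> ('k,'i) tel set" where
  "Iset Idem Gens eL eR J = len_part 2 ` J2 Idem Gens eL eR J"

definition phi :: "'k set \<Rightarrow> 'i set \<Rightarrow> ('i \<Rightarrow> 'k) \<Rightarrow> ('i \<Rightarrow> 'k) \<Rightarrow> ('k,'i) tel set \<Rightarrow> ('k,'i) tel \<Rightarrow> ('k,'i) tel" where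
  "phi Idem Gens eL eR J r =
     (THE v. v \<in> Vpow Idem Gens eL eR {1} \<and> v + r \<in> J2 Idem Gens eL eR J)"

definition paths2 :: "'i set \<Rightarrow> ('i \<Rightarrow> 'k) \<Rightarrow> ('i \<Rightarrow> 'k) \<Rightarrow> ('k,'i) path set" where
  "paths2 Gens eL eR = {(eL a, [a, b]) | a b. a \<in> Gens \<and> b \<in> Gens \<and> eR a = eL b}"

definition pair :: "'i set \<Rightarrow> ('i \<Rightarrow> 'k) \<Rightarrow> ('i \<Rightarrow> 'k) \<Rightarrow> ('k,'i) tel \<Rightarrow> ('k,'i) tel \<Rightarrow> int" where
  "pair Gens eL eR y r = (\<Sum>p\<in>paths2 Gens eL eR. y p * r p)"

definition Iperp :: "'k set \<Rightarrow> 'i set \<Rightarrow> ('i \<Rightarrow> 'k) \<Rightarrow> ('i \<Rightarrow> 'k) \<Rightarrow> ('k,'i) tel set \<Rightarrow> ('k,'i) tel set" where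
  "Iperp Idem Gens eL eR J =
     {y \<in> Vpow Idem Gens eL eR {2}. \<forall>r\<in>Iset Idem Gens eL eR J. pair Gens eL eR y r = 0}"

text \<open>Standing identification: the restriction map (V^* tensor_R V^*)/I^perp \<rightarrow> I^* = Hom_Z(I,Z)
  is an isomorphism, i.e. (injectivity being automatic) every additive functional on I is
  the restriction of an element of V^* tensor_R V^*.\<close>
definition restriction_onto_Idual :: "'k set \<Rightarrow> 'i set \<Rightarrow> ('i \<Rightarrow> 'k) \<Rightarrow> ('i \<Rightarrow> 'k) \<Rightarrow> ('k,'i) tel set \<Rightarrow> bool" where
  "restriction_onto_Idual Idem Gens eL eR J \<longleftrightarrow>
     (\<forall>f :: ('k,'i) tel \<Rightarrow> int.
        (\<forall>r\<in>Iset Idem Gens eL eR J. \<forall>s\<in>Iset Idem Gens eL eR J. f (r + s) = f r + f s)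
        \<longrightarrow> (\<exists>y\<in>Vpow Idem Gens eL eR {2}. \<forall>r\<in>Iset Idem Gens eL eR J. pair Gens eL eR y r = f r))"

text \<open>a tensor_R c^op for a in T(V^*), c in T(V): the tensor is over the right idempotents.\<close>
definition tens :: "('i \<Rightarrow> 'k) \<Rightarrow> ('k,'i) tel \<Rightarrow> ('k,'i) tel \<Rightarrow> ('k,'i) tensel" where
  "tens eR a c = (\<lambda>(p, q). if rend eR (fst p) (snd p) = rend eR (fst q) (snd q) then a p * c q else 0)"

text \<open>The kernel of T(V^*) tensor_R T(V)^op \<rightarrow> B^! tensor_R B^op; an element of the former
  is zero in the latter iff it lies in this subgroup (right exactness of tensor).\<close>
definition Nker :: "'k set \<Rightarrow> 'i set \<Rightarrow> ('i \<Rightarrow> 'k) \<Rightarrow> ('i \<Rightarrow> 'k) \<Rightarrow> ('k,'i) tel set \<Rightarrow> ('k,'i) tensel set" where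
  "Nker Idem Gens eL eR J = zspan
     ({tens eR a c | a c. a \<in> ideal_gen (TV Idem Gens eL eR) eR (Iperp Idem Gens eL eR J)
                          \<and> c \<in> TV Idem Gens eL eR}
      \<union> {tens eR a c | a c. a \<in> TV Idem Gens eL eR \<and> c \<in> J})"

definition hom1 :: "('i \<Rightarrow> 'g::group_add) \<Rightarrow> 'g \<Rightarrow> ('k,'i) tel \<Rightarrow> bool" where
  "hom1 deg g v \<longleftrightarrow> (\<forall>e a. v (e, [a]) \<noteq> 0 \<longrightarrow> deg a = g)"

definition hom2 :: "('i \<Rightarrow> 'g::group_add) \<Rightarrow> 'g \<Rightarrow> ('k,'i) tel \<Rightarrow> bool" where
  "hom2 deg g r \<longleftrightarrow> (\<forall>e a b. r (e, [a, b]) \<noteq> 0 \<longrightarrow> deg a + deg b = g)"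

definition hdeg_B :: nat where "hdeg_B = 0"
definition hdeg_dual :: nat where "hdeg_dual = 1"

definition delta'_idx :: "'i set \<Rightarrow> ('i \<Rightarrow> 'k) \<Rightarrow> 'k \<Rightarrow> 'i set" where
  "delta'_idx Gens eL e = {i \<in> Gens. eL i = e}"

text \<open>Left-hand side of the rank-one type DD relation for
  delta'(1) = sum_s a_s tensor c_s^op (representatives in T(V^*) tensor_R T(V)^op).
  mua s is (a representative of) mu_1(a_s), muc is the differential of B^op,
  ha / hc are homological degrees; c_t^op c_s^op = (c_s c_t)^op.\<close>
definition dd_expr :: "('i \<Rightarrow> 'k) \<Rightarrow> 's set \<Rightarrow> ('s \<Rightarrow> ('k,'i) tel) \<Rightarrow> ('s \<Rightarrow> ('k,'i) tel)
    \<Rightarrow> ('s \<Rightarrow> nat) \<Rightarrow> ('s \<Rightarrow> nat) \<Rightarrow> ('s \<Rightarrow> ('k,'i) tel) \<Rightarrow> (('k,'i) tel \<Rightarrow> ('k,'i) tel)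
    \<Rightarrow> ('k,'i) tensel" where
  "dd_expr eR S a c ha hc mua muc =
      (\<Sum>s\<in>S. zscale ((-1) ^ hc s) (tens eR (mua s) (c s)))
    + (\<Sum>s\<in>S. tens eR (a s) (muc (c s)))
    + (\<Sum>s\<in>S. \<Sum>t\<in>S. zscale ((-1) ^ (ha t * hc s))
                     (tens eR (tmul eR (a s) (a t)) (tmul eR (c s) (c t))))"

end

theory Submission
  imports Defs
begin


lemma sum_fun_apply: "(sum f A) x = (\<Sum>i\<in>A. f i x)" for f :: "'b \<Rightarrow> 'a \<Rightarrow> 'c::comm_monoid_add"
  by (induction A rule: infinite_finite_induct) auto

lemma zscale_apply: "zscale c f x = c * f x" by (simp add: zscale_def)

lemma tens_apply: "tens eR a c (p,q) = (if rend eR (fst p) (snd p) = rend eR (fst q) (snd q) then a p * c q else 0)"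
  by (simp add: tens_def)

lemma tens_addL: "tens eR (a + b) c = tens eR a c + tens eR b c"
  by (auto simp: fun_eq_iff tens_apply distrib_right)
lemma tens_addR: "tens eR a (c + d) = tens eR a c + tens eR a d"
  by (auto simp: fun_eq_iff tens_apply distrib_left)
lemma tens_minusL: "tens eR (a - b) c = tens eR a c - tens eR b c"
  by (auto simp: fun_eq_iff tens_apply left_diff_distrib)
lemma tens_minusR: "tens eR a (c - d) = tens eR a c - tens eR a d"
  by (auto simp: fun_eq_iff tens_apply right_diff_distrib)
lemma tens_zeroR: "tens eR a 0 = 0"
  by (auto simp: fun_eq_iff tens_apply zscale_apply)
lemma tens_zeroL: "tens eR 0 c = 0"
  by (auto simp: fun_eq_iff tens_apply zscale_apply)
lemma tens_scaleL: "tens eR (zscale k a) c = zscale k (tens eR a c)"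
  by (auto simp: fun_eq_iff tens_apply zscale_apply)
lemma tens_scaleR: "tens eR a (zscale k c) = zscale k (tens eR a c)"
  by (auto simp: fun_eq_iff tens_apply zscale_apply)
lemma tens_sumL: "tens eR (\<Sum>x\<in>A. f x) c = (\<Sum>x\<in>A. tens eR (f x) c)"
proof (induction A rule: infinite_finite_induct)
  case (insert x F) then show ?case by (simp only: sum.insert[OF insert(1,2)] tens_addL insert(3))
qed (simp_all add: tens_zeroL[unfolded zero_fun_def])
lemma tens_sumR: "tens eR a (\<Sum>x\<in>A. f x) = (\<Sum>x\<in>A. tens eR a (f x))"
proof (induction A rule: infinite_finite_induct)
  case (insert x F) then show ?case by (simp only: sum.insert[OF insert(1,2)] tens_addR insert(3))
qed (simp_all add: tens_zeroR[unfolded zero_fun_def])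

lemma zspan_sum: "(\<And>x. x \<in> A \<Longrightarrow> f x \<in> zspan S) \<Longrightarrow> (\<Sum>x\<in>A. f x) \<in> zspan S"
  by (induction A rule: infinite_finite_induct) (auto intro: zspan.intros)
lemma zspan_diff: "x \<in> zspan S \<Longrightarrow> y \<in> zspan S \<Longrightarrow> x - y \<in> zspan S"
  using zspan.add[OF _ zspan.neg, of x S y] by simp




definition subgrp :: "('a \<Rightarrow> int) set \<Rightarrow> bool" where
  "subgrp I \<longleftrightarrow> 0 \<in> I \<and> (\<forall>x\<in>I. \<forall>y\<in>I. x + y \<in> I) \<and> (\<forall>x\<in>I. - x \<in> I)"

lemma subgrp_diff: "subgrp I \<Longrightarrow> x \<in> I \<Longrightarrow> y \<in> I \<Longrightarrow> x - y \<in> I"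
  unfolding subgrp_def by (metis diff_conv_add_uminus)

lemma subgrp_scale_nat: "subgrp I \<Longrightarrow> r \<in> I \<Longrightarrow> zscale (int k) r \<in> I"
proof (induction k)
  case 0 then show ?case by (simp add: subgrp_def zscale_def zero_fun_def)
next
  case (Suc k)
  have "zscale (int (Suc k)) r = r + zscale (int k) r"
    by (simp add: fun_eq_iff zscale_apply distrib_right)
  then show ?case using Suc unfolding subgrp_def by metis
qed

lemma subgrp_scale: "subgrp I \<Longrightarrow> r \<in> I \<Longrightarrow> zscale c r \<in> I"
proof (cases "c \<ge> 0")
  case True
  assume a: "subgrp I" "r \<in> I"
  then show ?thesis using subgrp_scale_nat[OF a, of "nat c"] True by simp
next
  case False
  assume a: "subgrp I" "r \<in> I"
  have "zscale c r = - zscale (int (nat (-c))) r" using False by (simp add: fun_eq_iff zscale_apply)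
  then show ?thesis using subgrp_scale_nat[OF a, of "nat (-c)"] a(1) by (simp add: subgrp_def)
qed

lemma subgrp_sum: "subgrp I \<Longrightarrow> (\<And>x. x \<in> A \<Longrightarrow> f x \<in> I) \<Longrightarrow> (\<Sum>x\<in>A. f x) \<in> I"
proof (induction A rule: infinite_finite_induct)
  case (insert x F) then show ?case unfolding subgrp_def by (metis insertCI sum.insert)
qed (simp_all add: subgrp_def)

lemma dual_basis:
  fixes I :: "('a \<Rightarrow> int) set"
  assumes "finite P" "subgrp I" "\<forall>r\<in>I. \<forall>q. r q \<noteq> 0 \<longrightarrow> q \<in> P"
  shows "\<exists>n R F. (\<forall>j<n. R j \<in> I) \<and> (\<forall>j<n. \<forall>r\<in>I. \<forall>s\<in>I. F j (r+s) = F j r + F j s)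
           \<and> (\<forall>r\<in>I. r = (\<Sum>j<(n::nat). zscale (F j r) (R j)))"
  using assms
proof (induction P arbitrary: I rule: finite_induct)
  case empty
  then have "\<forall>r\<in>I. r = 0" by (auto simp: fun_eq_iff)
  then show ?case
    apply (intro exI[of _ 0] conjI)
    apply simp
    apply simp
    apply (simp only: lessThan_0 sum.empty)
    done
next
  case (insert p P)
  define I' where "I' = {r\<in>I. r p = 0}"
  have sI': "subgrp I'" using insert.prems(1) unfolding I'_def subgrp_def by auto
  have supI': "\<forall>r\<in>I'. \<forall>q. r q \<noteq> 0 \<longrightarrow> q \<in> P" using insert.prems(2) unfolding I'_def by auto
  obtain n :: nat and R F where R: "\<forall>j<n. R j \<in> I'" and F: "\<forall>j<n. \<forall>r\<in>I'. \<forall>s\<in>I'. F j (r+s) = F j r + F j s"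
    and rep: "\<forall>r\<in>I'. r = (\<Sum>j<n. zscale (F j r) (R j))"
    using insert.IH[OF sI' supI'] by blast
  show ?case
  proof (cases "\<forall>r\<in>I. r p = 0")
    case True
    then have "I' = I" unfolding I'_def by auto
    then show ?thesis using R F rep by blast
  next
    case False
    then obtain r1 where r1: "r1 \<in> I" "r1 p \<noteq> 0" by auto
    define Q where "Q = (\<lambda>k::nat. k > 0 \<and> (\<exists>r\<in>I. r p = int k))"
    have "Q (nat \<bar>r1 p\<bar>)"
    proof (cases "r1 p > 0")
      case True then show ?thesis using r1 unfolding Q_def by auto
    next
      case False
      have "- r1 \<in> I" using r1 insert.prems(1) by (simp add: subgrp_def)
      then show ?thesis using False r1 unfolding Q_def by (intro conjI bexI[of _ "- r1"]) auto
    qed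
    define d where "d = (LEAST k. Q k)"
    have Qd: "Q d" unfolding d_def by (rule LeastI) fact
    then obtain r0 where r0: "r0 \<in> I" "r0 p = int d" and dpos: "d > 0" unfolding Q_def by auto
    have dvd: "int d dvd r p" if "r \<in> I" for r
    proof (rule ccontr)
      assume nd: "\<not> int d dvd r p"
      define m where "m = r p mod int d"
      have m0: "m \<noteq> 0" using nd unfolding m_def by (simp add: dvd_eq_mod_eq_0)
      have m1: "m \<ge> 0" "m < int d" using dpos by (simp_all add: m_def)
      have m: "m > 0" "m < int d" using m0 m1 by auto
      define r' where "r' = r - zscale (r p div int d) r0"
      have "r' \<in> I" unfolding r'_def using subgrp_diff[OF insert.prems(1) that subgrp_scale[OF insert.prems(1) r0(1)]] .
      moreover have "r' p = m" unfolding r'_def m_def using r0(2) by (simp add: minus_div_mult_eq_mod zscale_apply)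
      ultimately have "Q (nat m)" using m unfolding Q_def by auto
      moreover have "nat m < d" using m by auto
      ultimately show False using not_less_Least unfolding d_def by blast
    qed
    define f0 where "f0 = (\<lambda>r. r p div int d)"
    define h where "h = (\<lambda>r. r - zscale (f0 r) r0)"
    have hI: "h r \<in> I'" if "r \<in> I" for r
    proof -
      have "h r \<in> I" unfolding h_def using subgrp_diff[OF insert.prems(1) that subgrp_scale[OF insert.prems(1) r0(1)]] .
      moreover have "h r p = 0" unfolding h_def f0_def using r0(2) dvd[OF that] by (simp add: zscale_apply)
      ultimately show ?thesis unfolding I'_def by auto
    qed
    have f0add: "f0 (r + s) = f0 r + f0 s" if "r \<in> I" "s \<in> I" for r s
      using dvd[OF that(1)] dvd[OF that(2)] unfolding f0_def by auto
    have hadd: "h (r + s) = h r + h s" if "r \<in> I" "s \<in> I" for r s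
      using f0add[OF that] unfolding h_def by (simp add: fun_eq_iff zscale_apply algebra_simps)
    define R' where "R' = (\<lambda>j. if j < n then R j else r0)"
    define F' where "F' = (\<lambda>j r. if j < n then F j (h r) else f0 r)"
    show ?thesis
    proof (intro exI[of _ "Suc n"] exI[of _ R'] exI[of _ F'] conjI allI impI ballI)
      fix j assume "j < Suc n" then show "R' j \<in> I" using R r0 unfolding R'_def I'_def by auto
    next
      fix j r s assume j: "j < Suc n" and rs: "r \<in> I" "s \<in> I"
      show "F' j (r + s) = F' j r + F' j s"
        using F hI[OF rs(1)] hI[OF rs(2)] hadd[OF rs] f0add[OF rs] j unfolding F'_def by auto
    next
      fix r assume r: "r \<in> I"
      have "(\<Sum>j<Suc n. zscale (F' j r) (R' j)) = (\<Sum>j<n. zscale (F j (h r)) (R j)) + zscale (f0 r) r0"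
        unfolding F'_def R'_def by simp
      also have "(\<Sum>j<n. zscale (F j (h r)) (R j)) = h r" using rep hI[OF r] by auto
      also have "h r + zscale (f0 r) r0 = r" unfolding h_def by simp
      finally show "r = (\<Sum>j<Suc n. zscale (F' j r) (R' j))" by (rule sym)
    qed
  qed
qed




lemma valid2: "valid_path Idem Gens eL eR (e,[a,b]) \<longleftrightarrow> e \<in> Idem \<and> a \<in> Gens \<and> b \<in> Gens \<and> eL a = e \<and> eL b = eR a"
  by (auto simp: valid_path_def)
lemma valid1: "valid_path Idem Gens eL eR (e,[a]) \<longleftrightarrow> e \<in> Idem \<and> a \<in> Gens \<and> eL a = e"
  by (auto simp: valid_path_def)

lemma TV_subgrp: "subgrp (TV Idem Gens eL eR)"
proof -
  have z: "0 \<in> TV Idem Gens eL eR" by (simp add: TV_def)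
  have a: "x + y \<in> TV Idem Gens eL eR" if x: "x \<in> TV Idem Gens eL eR" and y: "y \<in> TV Idem Gens eL eR" for x y
  proof -
    have sub: "{p. (x + y) p \<noteq> 0} \<subseteq> {p. x p \<noteq> 0} \<union> {p. y p \<noteq> 0}" by auto
    have "finite {p. x p \<noteq> 0}" "finite {p. y p \<noteq> 0}" using x y unfolding TV_def by auto
    then have "finite {p. (x + y) p \<noteq> 0}" by (rule finite_subset[OF sub finite_UnI])
    moreover have "\<forall>p. (x + y) p \<noteq> 0 \<longrightarrow> valid_path Idem Gens eL eR p"
    proof (intro allI impI)
      fix p assume "(x + y) p \<noteq> 0"
      then have "x p \<noteq> 0 \<or> y p \<noteq> 0" by auto
      then show "valid_path Idem Gens eL eR p" using x y unfolding TV_def by blast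
    qed
    ultimately show ?thesis unfolding TV_def mem_Collect_eq by (rule conjI)
  qed
  have n: "- x \<in> TV Idem Gens eL eR" if x: "x \<in> TV Idem Gens eL eR" for x
    using x unfolding TV_def by auto
  show ?thesis unfolding subgrp_def using z a n by simp
qed

lemma Vpow_subgrp: "subgrp (Vpow Idem Gens eL eR N)"
proof -
  have T: "subgrp (TV Idem Gens eL eR)" by (rule TV_subgrp)
  have a: "x + y \<in> Vpow Idem Gens eL eR N" if x: "x \<in> Vpow Idem Gens eL eR N" and y: "y \<in> Vpow Idem Gens eL eR N" for x y
  proof -
    have "x + y \<in> TV Idem Gens eL eR" using x y T unfolding subgrp_def Vpow_def by blast
    moreover have "\<forall>p. (x + y) p \<noteq> 0 \<longrightarrow> length (snd p) \<in> N"
    proof (intro allI impI)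
      fix p assume "(x + y) p \<noteq> 0"
      then have "x p \<noteq> 0 \<or> y p \<noteq> 0" by auto
      then show "length (snd p) \<in> N" using x y unfolding Vpow_def by blast
    qed
    ultimately show ?thesis unfolding Vpow_def by blast
  qed
  have n: "- x \<in> Vpow Idem Gens eL eR N" if x: "x \<in> Vpow Idem Gens eL eR N" for x
  proof -
    have "- x \<in> TV Idem Gens eL eR" using x T unfolding subgrp_def Vpow_def by blast
    then show ?thesis using x unfolding Vpow_def by auto
  qed
  have z: "0 \<in> Vpow Idem Gens eL eR N" using T unfolding subgrp_def Vpow_def by auto
  show ?thesis unfolding subgrp_def using z a n by simp
qed

lemma Vpow_TV: "Vpow Idem Gens eL eR N \<subseteq> TV Idem Gens eL eR"
  by (auto simp: Vpow_def)

lemma ideal_subgrp: "subgrp (ideal_gen T eR S)"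
  unfolding subgrp_def by (auto intro: ideal_gen.intros)

lemma m_eq: "tmul eR (gen eL s) (gen eL t) = (\<lambda>q. if q = (eL s,[s,t]) \<and> eR s = eL t then 1 else 0)"
proof (rule ext, clarify)
  fix e w
  let ?g = "\<lambda>n. gen eL s (e, take n w) * gen eL t (rend eR e (take n w), drop n w)"
  have z: "?g n = 0" if "n \<noteq> 1" for n
  proof (cases "take n w = [s]")
    case True
    then have "length (take n w) = 1" by simp
    then have "length w = 1" "n \<ge> 1" using that by (auto simp: min_def split: if_splits)
    with that have "drop n w = []" by simp
    then show ?thesis by (simp add: gen_def)
  next
    case False
    then show ?thesis by (simp add: gen_def)
  qed
  have "tmul eR (gen eL s) (gen eL t) (e, w) = (\<Sum>n\<le>length w. ?g n)" by (simp add: tmul_def)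
  also have "\<dots> = (if 1 \<le> length w then ?g 1 else 0)"
    using z by (subst sum.mono_neutral_right[of "{..length w}" "{1} \<inter> {..length w}"]) auto
  also have "\<dots> = (if (e, w) = (eL s, [s, t]) \<and> eR s = eL t then 1 else 0)"
  proof (cases w)
    case Nil then show ?thesis by simp
  next
    case (Cons a w')
    then show ?thesis by (cases w') (auto simp: gen_def)
  qed
  finally show "tmul eR (gen eL s) (gen eL t) (e, w) = (if (e, w) = (eL s, [s, t]) \<and> eR s = eL t then 1 else 0)" .
qed

lemma sum_zscale_apply: "(\<Sum>i\<in>A. zscale (c i) (f i)) x = (\<Sum>i\<in>A. c i * f i x)"
  by (simp add: sum_fun_apply zscale_apply)

lemma Vpow1_cases: "v \<in> Vpow Idem Gens eL eR {1} \<Longrightarrow> v (e, w) \<noteq> 0 \<Longrightarrow> \<exists>a. w = [a] \<and> a \<in> Gens \<and> e = eL a"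
proof -
  assume a: "v \<in> Vpow Idem Gens eL eR {1}" "v (e, w) \<noteq> 0"
  have "length w = 1" "e \<in> Idem" "set w \<subseteq> Gens" "chain eL eR e w"
    using a unfolding Vpow_def TV_def valid_path_def by auto
  then show ?thesis by (cases w) auto
qed

lemma Vpow2_cases: "v \<in> Vpow Idem Gens eL eR {2} \<Longrightarrow> v (e, w) \<noteq> 0 \<Longrightarrow>
   \<exists>a b. w = [a, b] \<and> a \<in> Gens \<and> b \<in> Gens \<and> e = eL a \<and> eL b = eR a"
proof -
  assume a: "v \<in> Vpow Idem Gens eL eR {2}" "v (e, w) \<noteq> 0"
  have "length w = 2" "e \<in> Idem" "set w \<subseteq> Gens" "chain eL eR e w"
    using a unfolding Vpow_def TV_def valid_path_def by auto
  then obtain a w' where w: "w = a # w'" by (cases w) auto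
  with \<open>length w = 2\<close> obtain b where "w = [a, b]" by (cases w') auto
  then show ?thesis using \<open>e \<in> Idem\<close> \<open>set w \<subseteq> Gens\<close> \<open>chain eL eR e w\<close> by auto
qed

lemma gen_expand:
  assumes v: "v \<in> Vpow Idem Gens eL eR {1}" and fin: "finite Gens"
  shows "v = (\<Sum>i\<in>Gens. zscale (v (eL i,[i])) (gen eL i))"
proof (rule ext, clarify)
  fix e w
  show "v (e, w) = (\<Sum>i\<in>Gens. zscale (v (eL i,[i])) (gen eL i)) (e, w)"
  proof (cases "\<exists>a. w = [a] \<and> a \<in> Gens \<and> e = eL a")
    case True
    then obtain a where a: "w = [a]" "a \<in> Gens" "e = eL a" by blast
    have "(\<Sum>i\<in>Gens. zscale (v (eL i,[i])) (gen eL i)) (e, w) = (\<Sum>i\<in>Gens. if i = a then v (eL i, [i]) else 0)"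
      unfolding sum_zscale_apply by (rule sum.cong) (auto simp: gen_def a)
    also have "\<dots> = v (e, w)" using a fin by simp
    finally show ?thesis by simp
  next
    case False
    then have "v (e, w) = 0" using Vpow1_cases[OF v] by blast
    moreover have "(\<Sum>i\<in>Gens. zscale (v (eL i,[i])) (gen eL i)) (e, w) = 0"
      unfolding sum_zscale_apply using False by (intro sum.neutral) (auto simp: gen_def)
    ultimately show ?thesis by simp
  qed
qed

lemma m_expand:
  assumes v: "v \<in> Vpow Idem Gens eL eR {2}" and fin: "finite Gens"
  shows "v = (\<Sum>s\<in>Gens. \<Sum>t\<in>Gens. zscale (v (eL s,[s,t])) (tmul eR (gen eL s) (gen eL t)))"
proof (rule ext, clarify)
  fix e w
  have sw: "(\<Sum>s\<in>Gens. \<Sum>t\<in>Gens. zscale (v (eL s,[s,t])) (tmul eR (gen eL s) (gen eL t))) (e, w)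
     = (\<Sum>s\<in>Gens. \<Sum>t\<in>Gens. v (eL s,[s,t]) * (if (e, w) = (eL s,[s,t]) \<and> eR s = eL t then 1 else 0))"
    by (simp add: sum_fun_apply m_eq zscale_apply)
  show "v (e, w) = (\<Sum>s\<in>Gens. \<Sum>t\<in>Gens. zscale (v (eL s,[s,t])) (tmul eR (gen eL s) (gen eL t))) (e, w)"
  proof (cases "\<exists>a b. w = [a, b] \<and> a \<in> Gens \<and> b \<in> Gens \<and> e = eL a \<and> eL b = eR a")
    case True
    then obtain a b where a: "w = [a, b]" "a \<in> Gens" "b \<in> Gens" "e = eL a" "eL b = eR a" by blast
    have "(\<Sum>s\<in>Gens. \<Sum>t\<in>Gens. v (eL s,[s,t]) * (if (e, w) = (eL s,[s,t]) \<and> eR s = eL t then 1 else 0))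
        = (\<Sum>s\<in>Gens. if s = a then (\<Sum>t\<in>Gens. if t = b then v (e, w) else 0) else 0)"
    proof (rule sum.cong[OF refl])
      fix s assume s: "s \<in> Gens"
      show "(\<Sum>t\<in>Gens. v (eL s,[s,t]) * (if (e, w) = (eL s,[s,t]) \<and> eR s = eL t then 1 else 0))
         = (if s = a then (\<Sum>t\<in>Gens. if t = b then v (e, w) else 0) else 0)"
      proof (cases "s = a")
        case True
        have "(\<Sum>t\<in>Gens. v (eL s,[s,t]) * (if (e, w) = (eL s,[s,t]) \<and> eR s = eL t then 1 else 0)) = (\<Sum>t\<in>Gens. if t = b then v (e, w) else 0)"
          using True by (intro sum.cong refl) (auto simp: a)
        then show ?thesis using True by simp
      next
        case False
        then show ?thesis by (simp add: a)
      qed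
    qed
    also have "\<dots> = v (e, w)" using a fin by simp
    finally show ?thesis using sw by simp
  next
    case False
    then have h1: "v (e, w) = 0" using Vpow2_cases[OF v] by blast
    have h2: "(\<Sum>s\<in>Gens. \<Sum>t\<in>Gens. v (eL s,[s,t]) * (if (e, w) = (eL s,[s,t]) \<and> eR s = eL t then 1 else 0)) = 0"
    proof (intro sum.neutral ballI)
      fix s t assume st: "s \<in> Gens" "t \<in> Gens"
      have "\<not> ((e, w) = (eL s,[s,t]) \<and> eR s = eL t)" using False st by auto
      then show "v (eL s,[s,t]) * (if (e, w) = (eL s,[s,t]) \<and> eR s = eL t then 1 else 0) = 0" by (simp only: if_not_P if_False mult_zero_right)
    qed
    show ?thesis by (simp only: sw h1 h2)
  qed
qed




definition unitT :: "'k set \<Rightarrow> ('k,'i) tel" where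
  "unitT Idem = (\<lambda>p. if snd p = [] \<and> fst p \<in> Idem then 1 else 0)"

lemma unit_TV: "finite Idem \<Longrightarrow> unitT Idem \<in> TV Idem Gens eL eR"
proof -
  assume f: "finite Idem"
  have eq: "{p. unitT Idem p \<noteq> 0} = (\<lambda>e. (e, [])) ` Idem" by (auto simp: unitT_def)
  have fin: "finite {p. unitT Idem p \<noteq> 0}" by (simp only: eq) (rule finite_imageI[OF f])
  have "\<forall>p. unitT Idem p \<noteq> 0 \<longrightarrow> valid_path Idem Gens eL eR p" by (auto simp: unitT_def valid_path_def)
  then show ?thesis using fin unfolding TV_def by blast
qed

lemma rend_idem: "e \<in> Idem \<Longrightarrow> set w \<subseteq> Gens \<Longrightarrow> eR ` Gens \<subseteq> Idem \<Longrightarrow> rend eR e w \<in> Idem"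
  by (induction w arbitrary: e) auto

lemma unit_left: assumes z: "z \<in> TV Idem Gens eL eR" shows "tmul eR (unitT Idem) z = z"
proof (rule ext, clarify)
  fix e w
  let ?g = "\<lambda>n. unitT Idem (e, take n w) * z (rend eR e (take n w), drop n w)"
  have "tmul eR (unitT Idem) z (e, w) = (\<Sum>n\<le>length w. ?g n)" by (simp add: tmul_def)
  also have "\<dots> = ?g 0"
    by (subst sum.mono_neutral_right[of "{..length w}" "{0}"]) (auto simp: unitT_def)
  also have "\<dots> = z (e, w)" using z by (auto simp: unitT_def TV_def valid_path_def)
  finally show "tmul eR (unitT Idem) z (e, w) = z (e, w)" .
qed

lemma unit_right: assumes z: "z \<in> TV Idem Gens eL eR" and eR: "eR ` Gens \<subseteq> Idem"
  shows "tmul eR z (unitT Idem) = z"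
proof (rule ext, clarify)
  fix e w
  let ?g = "\<lambda>n. z (e, take n w) * unitT Idem (rend eR e (take n w), drop n w)"
  have "tmul eR z (unitT Idem) (e, w) = (\<Sum>n\<le>length w. ?g n)" by (simp add: tmul_def)
  also have "\<dots> = ?g (length w)"
    by (subst sum.mono_neutral_right[of "{..length w}" "{length w}"]) (auto simp: unitT_def)
  also have "\<dots> = z (e, w)" using z rend_idem[OF _ _ eR, of e w] by (auto simp: unitT_def TV_def valid_path_def)
  finally show "tmul eR z (unitT Idem) (e, w) = z (e, w)" .
qed

lemma in_ideal:
  assumes "a \<in> S" "a \<in> TV Idem Gens eL eR" "finite Idem" "eR ` Gens \<subseteq> Idem"
  shows "a \<in> ideal_gen (TV Idem Gens eL eR) eR S"
proof -
  have u: "unitT Idem \<in> TV Idem Gens eL eR" by (rule unit_TV[OF assms(3)])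
  have "tmul eR (tmul eR (unitT Idem) a) (unitT Idem) \<in> ideal_gen (TV Idem Gens eL eR) eR S"
    by (rule ideal_gen.gen[OF u assms(1) u])
  then show ?thesis by (simp add: unit_left[OF assms(2)] unit_right[OF assms(2,4)])
qed

lemma finite_paths2: "finite Gens \<Longrightarrow> finite (paths2 Gens eL eR)"
proof -
  assume f: "finite Gens"
  have "paths2 Gens eL eR \<subseteq> (\<lambda>(a,b). (eL a, [a,b])) ` (Gens \<times> Gens)" by (auto simp: paths2_def)
  then show ?thesis using f by (meson finite_SigmaI finite_imageI finite_subset)
qed

lemma pair_lin:
  "pair Gens eL eR (y1 - (\<Sum>j\<in>A. zscale (c j) (y j))) r = pair Gens eL eR y1 r - (\<Sum>j\<in>A. c j * pair Gens eL eR (y j) r)"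
proof -
  let ?P = "paths2 Gens eL eR"
  have "pair Gens eL eR (y1 - (\<Sum>j\<in>A. zscale (c j) (y j))) r
      = (\<Sum>p\<in>?P. y1 p * r p - (\<Sum>j\<in>A. c j * (y j p * r p)))"
    unfolding pair_def by (simp add: sum_fun_apply zscale_apply left_diff_distrib sum_distrib_right mult.assoc)
  also have "\<dots> = (\<Sum>p\<in>?P. y1 p * r p) - (\<Sum>p\<in>?P. \<Sum>j\<in>A. c j * (y j p * r p))"
    by (simp add: sum_subtractf)
  also have "(\<Sum>p\<in>?P. \<Sum>j\<in>A. c j * (y j p * r p)) = (\<Sum>j\<in>A. \<Sum>p\<in>?P. c j * (y j p * r p))"
    by (rule sum.swap)
  also have "\<dots> = (\<Sum>j\<in>A. c j * pair Gens eL eR (y j) r)"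
    by (simp add: pair_def sum_distrib_left)
  finally show ?thesis by (simp add: pair_def)
qed

lemma pair_m:
  assumes f: "finite Gens" and st: "s \<in> Gens" "t \<in> Gens" and r: "\<forall>q. r q \<noteq> 0 \<longrightarrow> q \<in> paths2 Gens eL eR"
  shows "pair Gens eL eR (tmul eR (gen eL s) (gen eL t)) r = r (eL s, [s, t])"
proof (cases "eR s = eL t")
  case True
  then have p0: "(eL s, [s,t]) \<in> paths2 Gens eL eR" using st by (auto simp: paths2_def)
  have "pair Gens eL eR (tmul eR (gen eL s) (gen eL t)) r = (\<Sum>p\<in>paths2 Gens eL eR. if p = (eL s, [s,t]) then r p else 0)"
    unfolding pair_def m_eq using True by (intro sum.cong) auto
  also have "\<dots> = r (eL s, [s, t])" using sum.delta[OF finite_paths2[OF f], of "(eL s,[s,t])" r] p0 by simp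
  finally show ?thesis .
next
  case False
  then have "(eL s, [s,t]) \<notin> paths2 Gens eL eR" by (auto simp: paths2_def)
  then show ?thesis using False r unfolding pair_def m_eq by auto
qed




lemma subgrp_Int: "subgrp A \<Longrightarrow> subgrp B \<Longrightarrow> subgrp (A \<inter> B)"
  unfolding subgrp_def by blast

lemma len_part_add: "len_part k (x + y) = len_part k x + len_part k y"
  by (simp add: len_part_def fun_eq_iff)
lemma len_part_zero: "len_part k 0 = 0"
  by (simp add: len_part_def fun_eq_iff)
lemma len_part_neg: "len_part k (- x) = - len_part k x"
  by (simp add: len_part_def fun_eq_iff)

lemma len_part_Vpow: assumes x: "x \<in> Vpow Idem Gens eL eR N" shows "len_part k x \<in> Vpow Idem Gens eL eR {k}"
proof -
  have sub: "{p. len_part k x p \<noteq> 0} \<subseteq> {p. x p \<noteq> 0}" by (auto simp: len_part_def)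
  have "finite {p. x p \<noteq> 0}" using x by (simp add: Vpow_def TV_def)
  then have f: "finite {p. len_part k x p \<noteq> 0}" by (rule finite_subset[OF sub])
  have v: "\<forall>p. len_part k x p \<noteq> 0 \<longrightarrow> valid_path Idem Gens eL eR p"
    using x by (auto simp: Vpow_def TV_def len_part_def split: if_splits)
  have l: "\<forall>p. len_part k x p \<noteq> 0 \<longrightarrow> length (snd p) \<in> {k}"
    by (auto simp: len_part_def split: if_splits)
  show ?thesis using f v l unfolding Vpow_def TV_def by blast
qed

lemma len_part_split: assumes x: "x \<in> Vpow Idem Gens eL eR {1,2}" shows "x = len_part 1 x + len_part 2 x"
proof (rule ext)
  fix p show "x p = (len_part 1 x + len_part 2 x) p"
  proof (cases "x p = 0")
    case False
    then have "length (snd p) \<in> {1,2}" using x by (cases p) (auto simp: Vpow_def)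
    then show ?thesis by (auto simp: len_part_def)
  qed (simp add: len_part_def)
qed

lemma zscale_one: "zscale 1 x = x" by (simp add: zscale_def)
lemma zscale_add: "zscale c (a + b) = zscale c a + zscale c b" by (simp add: zscale_def fun_eq_iff distrib_left)

lemma m_V2: assumes "s \<in> Gens" "t \<in> Gens" "eL ` Gens \<subseteq> Idem"
  shows "tmul eR (gen eL s) (gen eL t) \<in> Vpow Idem Gens eL eR {2}"
proof -
  have sub: "{p. tmul eR (gen eL s) (gen eL t) p \<noteq> 0} \<subseteq> {(eL s, [s,t])}" by (auto simp: m_eq)
  have f: "finite {p. tmul eR (gen eL s) (gen eL t) p \<noteq> 0}" by (rule finite_subset[OF sub]) simp
  have "\<forall>p. tmul eR (gen eL s) (gen eL t) p \<noteq> 0 \<longrightarrow> valid_path Idem Gens eL eR p \<and> length (snd p) \<in> {2}"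
    using assms by (auto simp: m_eq valid_path_def)
  then show ?thesis using f unfolding Vpow_def TV_def by blast
qed

lemma gen_V1: assumes "i \<in> Gens" "eL ` Gens \<subseteq> Idem"
  shows "gen eL i \<in> Vpow Idem Gens eL eR {1}"
proof -
  have sub: "{p. gen eL i p \<noteq> 0} \<subseteq> {(eL i, [i])}" by (auto simp: gen_def)
  have f: "finite {p. gen eL i p \<noteq> 0}" by (rule finite_subset[OF sub]) simp
  have "\<forall>p. gen eL i p \<noteq> 0 \<longrightarrow> valid_path Idem Gens eL eR p \<and> length (snd p) \<in> {1}"
    using assms by (auto simp: gen_def valid_path_def)
  then show ?thesis using f unfolding Vpow_def TV_def by blast
qed

lemma sum_swap3: "(\<Sum>s\<in>A. \<Sum>t\<in>B. \<Sum>j\<in>C. f s t j) = (\<Sum>j\<in>C. \<Sum>s\<in>A. \<Sum>t\<in>B. f s t j)"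
proof -
  have "(\<Sum>s\<in>A. \<Sum>t\<in>B. \<Sum>j\<in>C. f s t j) = (\<Sum>s\<in>A. \<Sum>j\<in>C. \<Sum>t\<in>B. f s t j)"
    by (rule sum.cong[OF refl]) (rule sum.swap)
  also have "\<dots> = (\<Sum>j\<in>C. \<Sum>s\<in>A. \<Sum>t\<in>B. f s t j)" by (rule sum.swap)
  finally show ?thesis .
qed

lemma zscale_sum: "zscale c (\<Sum>j\<in>A. f j) = (\<Sum>j\<in>A. zscale c (f j))"
  by (simp add: zscale_def fun_eq_iff sum_fun_apply sum_distrib_left)

lemma sum_zscale_combine: "(\<Sum>j\<in>A. zscale (c j) (a j)) + (\<Sum>j\<in>A. zscale (c j) (b j)) = (\<Sum>j\<in>A. zscale (c j) (a j + b j))"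
  by (simp add: zscale_add sum.distrib)




theorem proposition4p25:
  fixes Idem :: "'k set" and Gens :: "'i set" and eL eR :: "'i \<Rightarrow> 'k"
    and J :: "('k,'i) tel set" and deg :: "'i \<Rightarrow> 'g::group_add"
    and psi :: "'i \<Rightarrow> ('k,'i) tel"
  assumes fin_idem: "finite Idem" and fin_gens: "finite Gens"
    and eL_idem: "eL ` Gens \<subseteq> Idem" and eR_idem: "eR ` Gens \<subseteq> Idem"
    and J_gen: "J = ideal_gen (TV Idem Gens eL eR) eR (J2 Idem Gens eL eR J)"
    and J_V: "J \<inter> Vpow Idem Gens eL eR {1} = {0}"
    and I_hom: "Iset Idem Gens eL eR J
                  = zspan {r \<in> Iset Idem Gens eL eR J. \<exists>g. hom2 deg g r}"
    and phi_hom: "\<forall>r\<in>Iset Idem Gens eL eR J. \<forall>g. hom2 deg g r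
                    \<longrightarrow> hom1 deg g (phi Idem Gens eL eR J r)"
    and I_ident: "restriction_onto_Idual Idem Gens eL eR J"
    and psi_in: "\<forall>i\<in>Gens. psi i \<in> Vpow Idem Gens eL eR {2}"
    and psi_mu1: "\<forall>i\<in>Gens. \<forall>r\<in>Iset Idem Gens eL eR J.
                    pair Gens eL eR (psi i) r = phi Idem Gens eL eR J r (eL i, [i])"
  shows "dd_expr eR (\<Union>e\<in>Idem. delta'_idx Gens eL e) (gen eL) (gen eL)
            (\<lambda>_. hdeg_dual) (\<lambda>_. hdeg_B) psi (\<lambda>_. 0)
         \<in> Nker Idem Gens eL eR J"
proof -
  let ?TV = "TV Idem Gens eL eR"
  let ?V1 = "Vpow Idem Gens eL eR {1}"
  let ?V2 = "Vpow Idem Gens eL eR {2}"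
  let ?V12 = "Vpow Idem Gens eL eR {1,2}"
  let ?J2 = "J2 Idem Gens eL eR J"
  let ?I = "Iset Idem Gens eL eR J"
  let ?phi = "phi Idem Gens eL eR J"
  let ?P2 = "paths2 Gens eL eR"
  let ?pair = "pair Gens eL eR"
  let ?m = "\<lambda>s t. tmul eR (gen eL s) (gen eL t)"
  let ?Ip = "Iperp Idem Gens eL eR J"
  let ?G = "{tens eR a c |a c. a \<in> ideal_gen ?TV eR ?Ip \<and> c \<in> ?TV} \<union> {tens eR a c |a c. a \<in> ?TV \<and> c \<in> J}"
  have sJ: "subgrp J" using J_gen ideal_subgrp by metis
  have sV1: "subgrp ?V1" and sV2: "subgrp ?V2" and sV12: "subgrp ?V12" by (rule Vpow_subgrp)+
  have sJ2: "subgrp ?J2" unfolding J2_def by (rule subgrp_Int[OF sJ sV12])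
  have J2J: "?J2 \<subseteq> J" by (auto simp: J2_def)
  have sI: "subgrp ?I"
  proof -
    have "0 \<in> ?I" unfolding Iset_def using sJ2 len_part_zero
      by (metis image_eqI subgrp_def)
    moreover have "x + y \<in> ?I" if xy: "x \<in> ?I" "y \<in> ?I" for x y
    proof -
      obtain a b where "a \<in> ?J2" "b \<in> ?J2" "x = len_part 2 a" "y = len_part 2 b"
        using xy unfolding Iset_def by blast
      then show ?thesis unfolding Iset_def using sJ2 len_part_add
        by (metis image_eqI subgrp_def)
    qed
    moreover have "- x \<in> ?I" if xI: "x \<in> ?I" for x
    proof -
      obtain a where "a \<in> ?J2" "x = len_part 2 a"
        using xI unfolding Iset_def by blast
      then show ?thesis unfolding Iset_def using sJ2 len_part_neg
        by (metis image_eqI subgrp_def)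
    qed
    ultimately show ?thesis unfolding subgrp_def by blast
  qed
  have I_V2: "r \<in> ?V2" if rI: "r \<in> ?I" for r
  proof -
    obtain a where "a \<in> ?J2" "r = len_part 2 a" using rI unfolding Iset_def by blast
    then show ?thesis using len_part_Vpow[of a Idem Gens eL eR "{1,2}" 2] unfolding J2_def by auto
  qed
  have I_supp: "\<forall>r\<in>?I. \<forall>q. r q \<noteq> 0 \<longrightarrow> q \<in> ?P2"
  proof (intro ballI allI impI)
    fix r q assume r: "r \<in> ?I" and q: "r q \<noteq> 0"
    obtain e w where qq: "q = (e, w)" by (cases q)
    then obtain a b where "w = [a, b]" "a \<in> Gens" "b \<in> Gens" "e = eL a" "eL b = eR a"
      using Vpow2_cases[OF I_V2[OF r], of e w] q by blast
    then show "q \<in> ?P2" unfolding qq paths2_def by auto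
  qed
  have phi_uniq: "?phi r = v" if v: "v \<in> ?V1" "v + r \<in> ?J2" for r v
    unfolding phi_def
  proof (rule the_equality)
    show "v \<in> ?V1 \<and> v + r \<in> ?J2" using v by blast
    fix v' assume v': "v' \<in> ?V1 \<and> v' + r \<in> ?J2"
    have "(v' + r) - (v + r) \<in> J" using subgrp_diff[OF sJ2 _ v(2)] v' J2J by blast
    moreover have "v' - v \<in> ?V1" using subgrp_diff[OF sV1] v v' by blast
    moreover have "(v' + r) - (v + r) = v' - v" by simp
    ultimately have "v' - v \<in> J \<inter> ?V1" by simp
    then have "v' - v = 0" using J_V by blast
    then show "v' = v" by simp
  qed
  have phi_ex: "?phi r \<in> ?V1 \<and> ?phi r + r \<in> ?J2" if r: "r \<in> ?I" for r
  proof -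
    obtain a where a: "a \<in> ?J2" "r = len_part 2 a" using r unfolding Iset_def by blast
    have a12: "a \<in> ?V12" using a by (simp add: J2_def)
    have "len_part 1 a \<in> ?V1" by (rule len_part_Vpow[OF a12])
    moreover have "len_part 1 a + r = a" using len_part_split[OF a12] a(2) by simp
    ultimately have "?phi r = len_part 1 a" using phi_uniq a(1) by simp
    then show ?thesis using \<open>len_part 1 a \<in> ?V1\<close> \<open>len_part 1 a + r = a\<close> a(1) by simp
  qed

  obtain n :: nat and R F where R: "\<forall>j<n. R j \<in> ?I"
    and Fadd: "\<forall>j<n. \<forall>r\<in>?I. \<forall>s\<in>?I. F j (r+s) = F j r + F j s"
    and rep: "\<forall>r\<in>?I. r = (\<Sum>j<n. zscale (F j r) (R j))"
    using dual_basis[OF finite_paths2[OF fin_gens] sI I_supp] by blast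
  have "\<forall>j. \<exists>yj. j < n \<longrightarrow> yj \<in> ?V2 \<and> (\<forall>r\<in>?I. ?pair yj r = F j r)"
  proof
    fix j show "\<exists>yj. j < n \<longrightarrow> yj \<in> ?V2 \<and> (\<forall>r\<in>?I. ?pair yj r = F j r)"
    proof (cases "j < n")
      case True
      then have "\<exists>yj\<in>?V2. \<forall>r\<in>?I. ?pair yj r = F j r"
        using I_ident Fadd unfolding restriction_onto_Idual_def by blast
      then show ?thesis by blast
    qed blast
  qed
  then obtain y where y: "\<forall>j<n. y j \<in> ?V2 \<and> (\<forall>r\<in>?I. ?pair (y j) r = F j r)" by metis
  have yV2: "y j \<in> ?V2" if "j < n" for j using y that by blast
  have yTV: "y j \<in> ?TV" if "j < n" for j using yV2[OF that] Vpow_TV by blast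
  have ypair: "?pair (y j) r = F j r" if "j < n" "r \<in> ?I" for j r using y that by blast
  have phiR: "?phi (R j) \<in> ?V1 \<and> ?phi (R j) + R j \<in> ?J2" if "j < n" for j using phi_ex R that by blast
  have RV2: "R j \<in> ?V2" if "j < n" for j using I_V2 R that by blast
  have phi_lin: "?phi r = (\<Sum>j<n. zscale (F j r) (?phi (R j)))" if r: "r \<in> ?I" for r
  proof (rule phi_uniq)
    show "(\<Sum>j<n. zscale (F j r) (?phi (R j))) \<in> ?V1"
      using phiR by (intro subgrp_sum[OF sV1] subgrp_scale[OF sV1]) auto
    have "(\<Sum>j<n. zscale (F j r) (?phi (R j))) + r = (\<Sum>j<n. zscale (F j r) (?phi (R j))) + (\<Sum>j<n. zscale (F j r) (R j))"
      using rep r by metis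
    also have "\<dots> = (\<Sum>j<n. zscale (F j r) (?phi (R j) + R j))" by (rule sum_zscale_combine)
    also have "\<dots> \<in> ?J2" using phiR by (intro subgrp_sum[OF sJ2] subgrp_scale[OF sJ2]) auto
    finally show "(\<Sum>j<n. zscale (F j r) (?phi (R j))) + r \<in> ?J2" .
  qed
  define z where "z = (\<lambda>s t. ?m s t - (\<Sum>j<n. zscale (R j (eL s,[s,t])) (y j)))"
  define w where "w = (\<lambda>i. (\<Sum>j<n. zscale (?phi (R j) (eL i,[i])) (y j)))"
  have z_Ip: "z s t \<in> ?Ip" if st: "s \<in> Gens" "t \<in> Gens" for s t
    unfolding Iperp_def
  proof (intro CollectI conjI ballI)
    show "z s t \<in> ?V2" unfolding z_def
      using yV2 by (intro subgrp_diff[OF sV2 m_V2[OF st eL_idem]] subgrp_sum[OF sV2] subgrp_scale[OF sV2]) auto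
    fix r assume r: "r \<in> ?I"
    have "?pair (z s t) r = ?pair (?m s t) r - (\<Sum>j<n. R j (eL s,[s,t]) * ?pair (y j) r)"
      unfolding z_def by (rule pair_lin)
    also have "\<dots> = r (eL s,[s,t]) - (\<Sum>j<n. R j (eL s,[s,t]) * F j r)"
    proof -
      have pm: "?pair (?m s t) r = r (eL s,[s,t])" using pair_m[OF fin_gens st] I_supp r by blast
      have "(\<Sum>j<n. R j (eL s,[s,t]) * ?pair (y j) r) = (\<Sum>j<n. R j (eL s,[s,t]) * F j r)"
        by (rule sum.cong) (simp_all add: ypair r)
      then show ?thesis using pm by simp
    qed
    also have "r (eL s,[s,t]) = (\<Sum>j<n. F j r * R j (eL s,[s,t]))"
    proof -
      have rr: "r = (\<Sum>j<n. zscale (F j r) (R j))" using rep r by blast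
      show ?thesis using fun_cong[OF rr, of "(eL s,[s,t])"] by (simp only: sum_zscale_apply)
    qed
    finally show "?pair (z s t) r = 0" by (simp add: mult.commute)
  qed
  have w_Ip: "psi i - w i \<in> ?Ip" if i: "i \<in> Gens" for i
    unfolding Iperp_def
  proof (intro CollectI conjI ballI)
    show "psi i - w i \<in> ?V2" unfolding w_def
      using yV2 psi_in i by (intro subgrp_diff[OF sV2] subgrp_sum[OF sV2] subgrp_scale[OF sV2]) auto
    fix r assume r: "r \<in> ?I"
    have "?pair (psi i - w i) r = ?pair (psi i) r - (\<Sum>j<n. ?phi (R j) (eL i,[i]) * ?pair (y j) r)"
      unfolding w_def by (rule pair_lin)
    also have "\<dots> = ?phi r (eL i,[i]) - (\<Sum>j<n. ?phi (R j) (eL i,[i]) * F j r)"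
    proof -
      have pm: "?pair (psi i) r = ?phi r (eL i,[i])" using psi_mu1 i r by blast
      have "(\<Sum>j<n. ?phi (R j) (eL i,[i]) * ?pair (y j) r) = (\<Sum>j<n. ?phi (R j) (eL i,[i]) * F j r)"
        by (rule sum.cong) (simp_all add: ypair r)
      then show ?thesis using pm by simp
    qed
    also have "?phi r (eL i,[i]) = (\<Sum>j<n. F j r * ?phi (R j) (eL i,[i]))"
      using fun_cong[OF phi_lin[OF r], of "(eL i,[i])"] by (simp only: sum_zscale_apply)
    finally have fin: "?pair (psi i - w i) r = (\<Sum>j<n. F j r * ?phi (R j) (eL i,[i])) - (\<Sum>j<n. ?phi (R j) (eL i,[i]) * F j r)" .
    moreover have "(\<Sum>j<n. F j r * ?phi (R j) (eL i,[i])) = (\<Sum>j<n. ?phi (R j) (eL i,[i]) * F j r)"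
      by (simp add: mult.commute)
    ultimately show "?pair (psi i - w i) r = 0" by (simp only: diff_self)
  qed
  have E1: "(\<Sum>s\<in>Gens. \<Sum>t\<in>Gens. tens eR (?m s t) (?m s t))
      = (\<Sum>s\<in>Gens. \<Sum>t\<in>Gens. tens eR (z s t) (?m s t)) + (\<Sum>j<n. tens eR (y j) (R j))"
  proof -
    have step: "tens eR (z s t) (?m s t) = tens eR (?m s t) (?m s t) - (\<Sum>j<n. tens eR (y j) (zscale (R j (eL s,[s,t])) (?m s t)))" for s t
      unfolding z_def by (simp only: tens_minusL tens_sumL tens_scaleL tens_scaleR)
    have "(\<Sum>s\<in>Gens. \<Sum>t\<in>Gens. tens eR (z s t) (?m s t))
       = (\<Sum>s\<in>Gens. \<Sum>t\<in>Gens. tens eR (?m s t) (?m s t))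
         - (\<Sum>s\<in>Gens. \<Sum>t\<in>Gens. \<Sum>j<n. tens eR (y j) (zscale (R j (eL s,[s,t])) (?m s t)))"
      by (simp only: step sum_subtractf)
    also have "(\<Sum>s\<in>Gens. \<Sum>t\<in>Gens. \<Sum>j<n. tens eR (y j) (zscale (R j (eL s,[s,t])) (?m s t)))
       = (\<Sum>j<n. \<Sum>s\<in>Gens. \<Sum>t\<in>Gens. tens eR (y j) (zscale (R j (eL s,[s,t])) (?m s t)))"
      by (rule sum_swap3)
    also have "\<dots> = (\<Sum>j<n. tens eR (y j) (\<Sum>s\<in>Gens. \<Sum>t\<in>Gens. zscale (R j (eL s,[s,t])) (?m s t)))"
      by (simp only: tens_sumR)
    also have "\<dots> = (\<Sum>j<n. tens eR (y j) (R j))"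
    proof (rule sum.cong[OF refl])
      fix j assume "j \<in> {..<n}"
      then have "R j = (\<Sum>s\<in>Gens. \<Sum>t\<in>Gens. zscale (R j (eL s,[s,t])) (?m s t))"
        by (intro m_expand[OF RV2 fin_gens]) simp
      then show "tens eR (y j) (\<Sum>s\<in>Gens. \<Sum>t\<in>Gens. zscale (R j (eL s,[s,t])) (?m s t)) = tens eR (y j) (R j)"
        by (rule arg_cong[symmetric])
    qed
    finally have h: "(\<Sum>s\<in>Gens. \<Sum>t\<in>Gens. tens eR (z s t) (?m s t)) = (\<Sum>s\<in>Gens. \<Sum>t\<in>Gens. tens eR (?m s t) (?m s t)) - (\<Sum>j<n. tens eR (y j) (R j))" .
    then have "(\<Sum>s\<in>Gens. \<Sum>t\<in>Gens. tens eR (z s t) (?m s t)) + (\<Sum>j<n. tens eR (y j) (R j)) = (\<Sum>s\<in>Gens. \<Sum>t\<in>Gens. tens eR (?m s t) (?m s t))"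
      by (simp only: eq_diff_eq)
    then show ?thesis by (rule sym)
  qed
  have E2: "(\<Sum>j<n. tens eR (y j) (R j))
      = (\<Sum>j<n. tens eR (y j) (?phi (R j) + R j)) - (\<Sum>i\<in>Gens. tens eR (w i) (gen eL i))"
  proof -
    have step: "tens eR (w i) (gen eL i) = (\<Sum>j<n. tens eR (y j) (zscale (?phi (R j) (eL i,[i])) (gen eL i)))" for i
      unfolding w_def by (simp only: tens_sumL tens_scaleL tens_scaleR)
    have "(\<Sum>i\<in>Gens. tens eR (w i) (gen eL i))
        = (\<Sum>i\<in>Gens. \<Sum>j<n. tens eR (y j) (zscale (?phi (R j) (eL i,[i])) (gen eL i)))"
      by (simp only: step)
    also have "\<dots> = (\<Sum>j<n. \<Sum>i\<in>Gens. tens eR (y j) (zscale (?phi (R j) (eL i,[i])) (gen eL i)))"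
      by (rule sum.swap)
    also have "\<dots> = (\<Sum>j<n. tens eR (y j) (\<Sum>i\<in>Gens. zscale (?phi (R j) (eL i,[i])) (gen eL i)))"
      by (simp only: tens_sumR)
    also have "\<dots> = (\<Sum>j<n. tens eR (y j) (?phi (R j)))"
    proof (rule sum.cong[OF refl])
      fix j assume "j \<in> {..<n}"
      then have "?phi (R j) = (\<Sum>i\<in>Gens. zscale (?phi (R j) (eL i,[i])) (gen eL i))"
        using phiR by (intro gen_expand[OF _ fin_gens, of _ Idem eL eR]) simp
      then show "tens eR (y j) (\<Sum>i\<in>Gens. zscale (?phi (R j) (eL i,[i])) (gen eL i)) = tens eR (y j) (?phi (R j))"
        by (rule arg_cong[symmetric])
    qed
    finally have W: "(\<Sum>i\<in>Gens. tens eR (w i) (gen eL i)) = (\<Sum>j<n. tens eR (y j) (?phi (R j)))" .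
    have "(\<Sum>j<n. tens eR (y j) (?phi (R j) + R j)) = (\<Sum>j<n. tens eR (y j) (?phi (R j))) + (\<Sum>j<n. tens eR (y j) (R j))"
      by (simp only: tens_addR sum.distrib)
    then show ?thesis unfolding W by simp
  qed
  have S: "(\<Union>e\<in>Idem. delta'_idx Gens eL e) = Gens"
    using eL_idem by (auto simp: delta'_idx_def)
  have dd: "dd_expr eR (\<Union>e\<in>Idem. delta'_idx Gens eL e) (gen eL) (gen eL)
            (\<lambda>_. hdeg_dual) (\<lambda>_. hdeg_B) psi (\<lambda>_. 0)
      = (\<Sum>i\<in>Gens. tens eR (psi i) (gen eL i)) + (\<Sum>s\<in>Gens. \<Sum>t\<in>Gens. tens eR (?m s t) (?m s t))"
    unfolding dd_expr_def S hdeg_dual_def hdeg_B_def by (simp add: zscale_one tens_zeroR)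
  have final: "dd_expr eR (\<Union>e\<in>Idem. delta'_idx Gens eL e) (gen eL) (gen eL)
            (\<lambda>_. hdeg_dual) (\<lambda>_. hdeg_B) psi (\<lambda>_. 0)
      = (\<Sum>i\<in>Gens. tens eR (psi i - w i) (gen eL i))
        + (\<Sum>s\<in>Gens. \<Sum>t\<in>Gens. tens eR (z s t) (?m s t))
        + (\<Sum>j<n. tens eR (y j) (?phi (R j) + R j))"
    unfolding dd E1 E2 by (simp add: tens_minusL sum_subtractf algebra_simps)
  have IpTV: "a \<in> ?Ip \<Longrightarrow> a \<in> ?TV" for a using Vpow_TV[of Idem Gens eL eR "{2}"] by (auto simp: Iperp_def)
  have inG1: "tens eR a c \<in> zspan ?G" if "a \<in> ?Ip" "c \<in> ?TV" for a c
    using in_ideal[OF that(1) IpTV[OF that(1)] fin_idem eR_idem] that(2) by (intro zspan.base) blast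
  have inG2: "tens eR a c \<in> zspan ?G" if "a \<in> ?TV" "c \<in> J" for a c
    using that by (intro zspan.base) blast
  have genTV: "gen eL i \<in> ?TV" if "i \<in> Gens" for i using gen_V1[OF that eL_idem] Vpow_TV by blast
  have mTV: "?m s t \<in> ?TV" if "s \<in> Gens" "t \<in> Gens" for s t using m_V2[OF that eL_idem] Vpow_TV by blast
  have "(\<Sum>i\<in>Gens. tens eR (psi i - w i) (gen eL i))
        + (\<Sum>s\<in>Gens. \<Sum>t\<in>Gens. tens eR (z s t) (?m s t))
        + (\<Sum>j<n. tens eR (y j) (?phi (R j) + R j)) \<in> zspan ?G"
    using w_Ip genTV z_Ip mTV yTV phiR J2J
    by (intro zspan.add zspan_sum inG1 inG2) auto
  then show ?thesis unfolding final Nker_def .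
qed


end
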